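(* Let $M$ be a monoid of binary relations on a finite set $Q$ and let $e\in M$ be an idempotent. Let $\sigma\neq\tau$ be two distinct strongly connected components of the restriction of $e$ to its set of fixed points, and let $s\in\sigma$, $t\in\tau$. If $(s,t)\in e$, then for every $m\in H(e)$ we have $(t,s)\notin m$, and $(\sigma,\tau)\notin\gamma_e(m)$.
   Context: Monoid of relations: set of relations on $Q$ containing the identity and closed under composition $mn=\{(p,q)\mid\exists r,(p,r)\in m,(r,q)\in n\}$. Fixed point of $e$: $q$ with $(q,q)\in e$. $H(e)$ is the $\mathcal H$-class of $e$ in $M$, a group with identity $e$; $m^{-1}$ is the inverse in this group. For $m\in H(e)$, $\gamma_e(m)$ is the relation on the set $\Gamma$ of strongly connected components of fixed points of $e$ given by $(\rho,\sigma)\in\gamma_e(m)$ iff $(r,s)\in m$ and $(s,r)\in m^{-1}$ for some $r\in\rho$, $s\in\sigma$. *)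

theory Defs
  imports Main
begin

definition rel_monoid :: "'a set \<Rightarrow> ('a \<times> 'a) set set \<Rightarrow> bool" where
  "rel_monoid Q M \<longleftrightarrow> (\<forall>m\<in>M. m \<subseteq> Q \<times> Q) \<and> Id_on Q \<in> M \<and>
     (\<forall>m\<in>M. \<forall>n\<in>M. m O n \<in> M)"

definition fixpts :: "('a \<times> 'a) set \<Rightarrow> 'a set" where
  "fixpts e = {q. (q, q) \<in> e}"

definition fix_restr :: "('a \<times> 'a) set \<Rightarrow> ('a \<times> 'a) set" where
  "fix_restr e = e \<inter> (fixpts e \<times> fixpts e)"

definition scc_of :: "('a \<times> 'a) set \<Rightarrow> 'a \<Rightarrow> 'a set" where
  "scc_of e p = {q \<in> fixpts e. (p, q) \<in> (fix_restr e)\<^sup>* \<and> (q, p) \<in> (fix_restr e)\<^sup>*}"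

definition sccs :: "('a \<times> 'a) set \<Rightarrow> 'a set set" where
  "sccs e = scc_of e ` fixpts e"

text \<open>Green's H-class of e in the monoid M (M^1 = M since M is a monoid).\<close>
definition Hclass :: "('a \<times> 'a) set set \<Rightarrow> ('a \<times> 'a) set \<Rightarrow> ('a \<times> 'a) set set" where
  "Hclass M e = {m \<in> M. (\<lambda>x. m O x) ` M = (\<lambda>x. e O x) ` M \<and>
                         (\<lambda>x. x O m) ` M = (\<lambda>x. x O e) ` M}"

definition Hinv :: "('a \<times> 'a) set set \<Rightarrow> ('a \<times> 'a) set \<Rightarrow> ('a \<times> 'a) set \<Rightarrow> ('a \<times> 'a) set" where
  "Hinv M e m = (THE n. n \<in> Hclass M e \<and> m O n = e \<and> n O m = e)"

definition gamma :: "('a \<times> 'a) set set \<Rightarrow> ('a \<times> 'a) set \<Rightarrow> ('a \<times> 'a) set \<Rightarrow> ('a set \<times> 'a set) set" where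
  "gamma M e m = {(\<rho>, \<sigma>). \<rho> \<in> sccs e \<and> \<sigma> \<in> sccs e \<and>
      (\<exists>r\<in>\<rho>. \<exists>s\<in>\<sigma>. (r, s) \<in> m \<and> (s, r) \<in> Hinv M e m)}"

end

theory Submission
  imports Defs
begin

lemma hc_basic:
  assumes "rel_monoid Q M" "e \<in> M" "e O e = e" "h \<in> Hclass M e"
  shows "h \<in> M" "e O h = h" "h O e = h" "\<exists>n\<in>M. n O h = e" "\<exists>n\<in>M. h O n = e"
proof -
  have hM: "h \<in> M" using assms(4) unfolding Hclass_def by auto
  show "h \<in> M" by fact
  have IdM: "Id_on Q \<in> M" using assms(1) unfolding rel_monoid_def by auto
  have hQ: "h \<subseteq> Q \<times> Q" "e \<subseteq> Q \<times> Q" using assms(1) hM assms(2) unfolding rel_monoid_def by auto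
  have ee: "e O Id_on Q = e" "Id_on Q O e = e" "h O Id_on Q = h" "Id_on Q O h = h" using hQ by auto
  have L: "(\<lambda>x. h O x) ` M = (\<lambda>x. e O x) ` M" and R: "(\<lambda>x. x O h) ` M = (\<lambda>x. x O e) ` M"
    using assms(4) unfolding Hclass_def by auto
  have "h \<in> (\<lambda>x. e O x) ` M" using L IdM ee by (metis image_eqI)
  then obtain x where x: "h = e O x" by auto
  show "e O h = h" unfolding x by (simp add: O_assoc[symmetric] assms(3))
  have "h \<in> (\<lambda>x. x O e) ` M" using R IdM ee by (metis image_eqI)
  then obtain y where y: "h = y O e" by auto
  show "h O e = h" unfolding y by (simp add: O_assoc assms(3))
  have "e \<in> (\<lambda>x. x O h) ` M" using R IdM ee by (metis image_eqI)
  then show "\<exists>n\<in>M. n O h = e" by auto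
  have "e \<in> (\<lambda>x. h O x) ` M" using L IdM ee by (metis image_eqI)
  then show "\<exists>n\<in>M. h O n = e" by auto
qed

lemma period:
  assumes "finite Q" "rel_monoid Q M" "e \<in> M" "e O e = e" "h \<in> Hclass M e"
  shows "\<exists>d\<ge>1. h ^^ d O e = e"
proof -
  note hb = hc_basic[OF assms(2-5)]
  define P where "P j = h ^^ j O e" for j
  have comp: "a \<in> M \<Longrightarrow> b \<in> M \<Longrightarrow> a O b \<in> M" for a b using assms(2) unfolding rel_monoid_def by auto
  have PS: "P (Suc j) = P j O h" for j
    unfolding P_def by (simp add: O_assoc hb(2,3))
  have PS2: "P (Suc j) = h O P j" for j
    unfolding P_def by (simp add: O_assoc[symmetric] relpow_commute)
  have PM: "P j \<in> M" for j
  proof (induction j)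
    case 0 then show ?case by (simp add: P_def assms(3))
  next
    case (Suc j) then show ?case unfolding PS using comp hb(1) by blast
  qed
  have eP: "e O P j = P j" for j
  proof (induction j)
    case 0 then show ?case by (simp add: P_def assms(4))
  next
    case (Suc j) then show ?case unfolding PS by (simp add: O_assoc[symmetric])
  qed
  obtain n where n: "n \<in> M" "n O h = e" using hb(4) by auto
  have bk: "n O P (Suc j) = P j" for j
    by (simp add: PS2 O_assoc[symmetric] n(2) eP)
  have fin: "finite M"
  proof -
    have "M \<subseteq> Pow (Q \<times> Q)" using assms(2) unfolding rel_monoid_def by auto
    then show ?thesis using assms(1) finite_subset by blast
  qed
  have "range P \<subseteq> M" using PM by auto
  then have "finite (range P)" using fin finite_subset by blast
  then have "\<not> inj P" using finite_imageD[of P UNIV] infinite_UNIV_nat by blast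
  then obtain i j where ij: "i \<noteq> j" "P i = P j" unfolding inj_def by auto
  have red: "P i = P (i + d) \<Longrightarrow> P 0 = P d" for i d
  proof (induction i)
    case 0 then show ?case by simp
  next
    case (Suc i)
    have "P (Suc i) = P (Suc (i + d))" using Suc.prems by simp
    then have "n O P (Suc i) = n O P (Suc (i + d))" by (rule arg_cong)
    then have "P i = P (i + d)" unfolding bk .
    then show ?case by (rule Suc.IH)
  qed
  have "\<exists>a d. d \<ge> 1 \<and> P a = P (a + d)"
  proof (cases "i < j")
    case True
    then have "j = i + (j - i)" "1 \<le> j - i" by auto
    then show ?thesis using ij(2) by metis
  next
    case False
    then have "i = j + (i - j)" "1 \<le> i - j" using ij(1) by auto
    then show ?thesis using ij(2) by metis
  qed
  then obtain a d where "d \<ge> 1" "P a = P (a + d)" by auto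
  then have "P 0 = P d" using red[of a d] by simp
  then have "h ^^ d O e = e" unfolding P_def by simp
  then show ?thesis using \<open>d \<ge> 1\<close> by blast
qed

lemma keyA:
  assumes "finite Q" "rel_monoid Q M" "e \<in> M" "e O e = e" "h \<in> Hclass M e"
    and "(s, t) \<in> e" "(t, s) \<in> h" "(s, s) \<in> e"
  shows "(t, s) \<in> e"
proof -
  note hb = hc_basic[OF assms(2-5)]
  obtain d where d: "d \<ge> 1" "h ^^ d O e = e" using period[OF assms(1-5)] by auto
  have "(s, s) \<in> e O h" using assms(6,7) by (rule relcompI)
  then have ss: "(s, s) \<in> h" unfolding hb(2) .
  have ts: "(t, s) \<in> h ^^ Suc k" for k
  proof (induction k)
    case 0 show ?case using assms(7) by simp
  next
    case (Suc k) then show ?case using ss by (rule relpow_Suc_I)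
  qed
  have "d = Suc (d - 1)" using d(1) by simp
  then have "(t, s) \<in> h ^^ d" using ts[of "d - 1"] by simp
  then have "(t, s) \<in> h ^^ d O e" using assms(8) by (rule relcompI)
  then show ?thesis unfolding d(2) .
qed


lemma scc_fix: "\<sigma> \<in> sccs e \<Longrightarrow> x \<in> \<sigma> \<Longrightarrow> x \<in> fixpts e"
  unfolding sccs_def scc_of_def by auto

lemma scc_same: "\<sigma> \<in> sccs e \<Longrightarrow> x \<in> \<sigma> \<Longrightarrow> y \<in> \<sigma> \<Longrightarrow> (x, y) \<in> (fix_restr e)\<^sup>*"
  unfolding sccs_def scc_of_def by (auto intro: rtrancl_trans)

lemma scc_eq:
  assumes "\<sigma> \<in> sccs e" "\<tau> \<in> sccs e" "x \<in> \<sigma>" "y \<in> \<tau>"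
    "(x, y) \<in> (fix_restr e)\<^sup>*" "(y, x) \<in> (fix_restr e)\<^sup>*"
  shows "\<sigma> = \<tau>"
proof -
  obtain p where p: "\<sigma> = scc_of e p" using assms(1) unfolding sccs_def by auto
  obtain q where q: "\<tau> = scc_of e q" using assms(2) unfolding sccs_def by auto
  have "(p, x) \<in> (fix_restr e)\<^sup>*" "(x, p) \<in> (fix_restr e)\<^sup>*"
    using assms(3) p unfolding scc_of_def by auto
  moreover have "(q, y) \<in> (fix_restr e)\<^sup>*" "(y, q) \<in> (fix_restr e)\<^sup>*"
    using assms(4) q unfolding scc_of_def by auto
  ultimately have "(p, q) \<in> (fix_restr e)\<^sup>*" "(q, p) \<in> (fix_restr e)\<^sup>*"
    using assms(5,6) by (meson rtrancl_trans)+
  then show ?thesis unfolding p q scc_of_def by (auto intro: rtrancl_trans)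
qed

lemma rtr_e:
  assumes "(x, y) \<in> (fix_restr e)\<^sup>*" "e O e = e"
  shows "x = y \<or> (x, y) \<in> e"
  using assms(1)
proof (induction rule: rtrancl_induct)
  case base then show ?case by simp
next
  case (step y z)
  then have "(y, z) \<in> e" unfolding fix_restr_def by auto
  with step.IH show ?case using assms(2) by blast
qed

lemma Hinv_props:
  assumes "finite Q" "rel_monoid Q M" "e \<in> M" "e O e = e" "m \<in> Hclass M e"
  shows "Hinv M e m \<in> Hclass M e \<and> m O Hinv M e m = e \<and> Hinv M e m O m = e"
proof -
  note hb = hc_basic[OF assms(2-5)]
  obtain d where d: "d \<ge> 1" "m ^^ d O e = e" using period[OF assms] by auto
  define K where "K = m ^^ (d - 1) O e"
  have comp: "a \<in> M \<Longrightarrow> b \<in> M \<Longrightarrow> a O b \<in> M" for a b using assms(2) unfolding rel_monoid_def by auto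
  have dd: "d = Suc (d - 1)" using d by simp
  have K1: "K O m = e"
    unfolding K_def using d(2) dd by (metis O_assoc hb(2,3) relpow.simps(2))
  have K2: "m O K = e"
    unfolding K_def using d(2) dd by (metis O_assoc relpow.simps(2) relpow_commute)
  have PM: "m ^^ j O e \<in> M" for j
  proof (induction j)
    case 0 then show ?case by (simp add: assms(3))
  next
    case (Suc j)
    have "m ^^ Suc j O e = (m ^^ j O e) O m" by (simp add: O_assoc hb(2,3))
    then show ?case using Suc comp hb(1) by metis
  qed
  have KM: "K \<in> M" unfolding K_def by (rule PM)
  have eP: "e O (m ^^ j O e) = m ^^ j O e" for j
  proof (induction j)
    case 0 then show ?case by (simp add: assms(4))
  next
    case (Suc j)
    have "m ^^ Suc j O e = (m ^^ j O e) O m" by (simp add: O_assoc hb(2,3))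
    then show ?case using Suc by (metis O_assoc)
  qed
  have eK: "e O K = K" unfolding K_def by (rule eP)
  have Ke: "K O e = K" unfolding K_def by (simp add: O_assoc assms(4))
  have KH: "K \<in> Hclass M e"
    unfolding Hclass_def
  proof (intro CollectI conjI KM)
    show "(\<lambda>x. K O x) ` M = (\<lambda>x. e O x) ` M"
    proof
      show "(\<lambda>x. K O x) ` M \<subseteq> (\<lambda>x. e O x) ` M"
      proof
        fix y assume "y \<in> (\<lambda>x. K O x) ` M"
        then obtain x where x: "x \<in> M" "y = K O x" by auto
        then have "y = e O (K O x)" by (metis O_assoc eK)
        then show "y \<in> (\<lambda>x. e O x) ` M" using x KM comp by blast
      qed
      show "(\<lambda>x. e O x) ` M \<subseteq> (\<lambda>x. K O x) ` M"
      proof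
        fix y assume "y \<in> (\<lambda>x. e O x) ` M"
        then obtain x where x: "x \<in> M" "y = e O x" by auto
        then have "y = K O (m O x)" by (metis O_assoc K1)
        then show "y \<in> (\<lambda>x. K O x) ` M" using x hb(1) comp by blast
      qed
    qed
    show "(\<lambda>x. x O K) ` M = (\<lambda>x. x O e) ` M"
    proof
      show "(\<lambda>x. x O K) ` M \<subseteq> (\<lambda>x. x O e) ` M"
      proof
        fix y assume "y \<in> (\<lambda>x. x O K) ` M"
        then obtain x where x: "x \<in> M" "y = x O K" by auto
        then have "y = (x O K) O e" by (metis O_assoc Ke)
        then show "y \<in> (\<lambda>x. x O e) ` M" using x KM comp by blast
      qed
      show "(\<lambda>x. x O e) ` M \<subseteq> (\<lambda>x. x O K) ` M"
      proof
        fix y assume "y \<in> (\<lambda>x. x O e) ` M"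
        then obtain x where x: "x \<in> M" "y = x O e" by auto
        then have "y = (x O m) O K" by (metis O_assoc K2)
        then show "y \<in> (\<lambda>x. x O K) ` M" using x hb(1) comp by blast
      qed
    qed
  qed
  have uniq: "n = K" if "n \<in> Hclass M e" "m O n = e" "n O m = e" for n
  proof -
    have ne: "n O e = n" using hc_basic[OF assms(2-4) that(1)] by simp
    have "n = n O (m O K)" using ne K2 by simp
    also have "\<dots> = e O K" using that(3) by (simp add: O_assoc[symmetric])
    finally show ?thesis using eK by simp
  qed
  have "Hinv M e m = K"
    unfolding Hinv_def
  proof (rule the_equality)
    show "K \<in> Hclass M e \<and> m O K = e \<and> K O m = e" using KH K1 K2 by blast
    show "n = K" if "n \<in> Hclass M e \<and> m O n = e \<and> n O m = e" for n
      using uniq that by blast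
  qed
  then show ?thesis using KH K1 K2 by simp
qed

theorem mainTheorem8:
  fixes Q :: "'a set" and M :: "('a \<times> 'a) set set" and e m :: "('a \<times> 'a) set"
    and \<sigma> \<tau> :: "'a set" and s t :: 'a
  assumes "finite Q" and "rel_monoid Q M"
    and "e \<in> M" and "e O e = e"
    and "\<sigma> \<in> sccs e" and "\<tau> \<in> sccs e" and "\<sigma> \<noteq> \<tau>"
    and "s \<in> \<sigma>" and "t \<in> \<tau>" and "(s, t) \<in> e"
    and "m \<in> Hclass M e"
  shows "(t, s) \<notin> m \<and> (\<sigma>, \<tau>) \<notin> gamma M e m"
proof
  have sf: "s \<in> fixpts e" by (rule scc_fix[OF assms(5,8)])
  have tf: "t \<in> fixpts e" by (rule scc_fix[OF assms(6,9)])
  have ssf: "(s, s) \<in> e" using sf unfolding fixpts_def by simp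
  have st: "(s, t) \<in> (fix_restr e)\<^sup>*"
    by (rule r_into_rtrancl) (use sf tf assms(10) in \<open>simp add: fix_restr_def\<close>)
  show "(t, s) \<notin> m"
  proof
    assume tsm: "(t, s) \<in> m"
    have "(t, s) \<in> e" by (rule keyA[OF assms(1-4,11) assms(10) tsm ssf])
    then have "(t, s) \<in> (fix_restr e)\<^sup>*"
      by (intro r_into_rtrancl) (use sf tf in \<open>simp add: fix_restr_def\<close>)
    then have "\<sigma> = \<tau>" by (rule scc_eq[OF assms(5,6,8,9) st])
    then show False using assms(7) by simp
  qed
  show "(\<sigma>, \<tau>) \<notin> gamma M e m"
  proof
    assume "(\<sigma>, \<tau>) \<in> gamma M e m"
    then obtain r u where ru: "r \<in> \<sigma>" "u \<in> \<tau>" "(r, u) \<in> m" "(u, r) \<in> Hinv M e m"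
      unfolding gamma_def by auto
    have rf: "r \<in> fixpts e" by (rule scc_fix[OF assms(5) ru(1)])
    have uf: "u \<in> fixpts e" by (rule scc_fix[OF assms(6) ru(2)])
    have rr: "(r, r) \<in> e" using rf unfolding fixpts_def by simp
    have p1: "(r, s) \<in> (fix_restr e)\<^sup>*" by (rule scc_same[OF assms(5) ru(1) assms(8)])
    have p2: "(t, u) \<in> (fix_restr e)\<^sup>*" by (rule scc_same[OF assms(6) assms(9) ru(2)])
    have ru_path: "(r, u) \<in> (fix_restr e)\<^sup>*" using rtrancl_trans[OF rtrancl_trans[OF p1 st] p2] .
    have "r \<noteq> u"
    proof
      assume "r = u"
      then have "u \<in> \<sigma>" using ru(1) by simp
      have "\<sigma> = \<tau>" by (rule scc_eq[OF assms(5,6) \<open>u \<in> \<sigma>\<close> ru(2) rtrancl_refl rtrancl_refl])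
      then show False using assms(7) by simp
    qed
    then have rue: "(r, u) \<in> e" using rtr_e[OF ru_path assms(4)] by simp
    have HH: "Hinv M e m \<in> Hclass M e" using Hinv_props[OF assms(1-4,11)] by simp
    have "(u, r) \<in> e" by (rule keyA[OF assms(1-4) HH rue ru(4) rr])
    then have "(u, r) \<in> (fix_restr e)\<^sup>*"
      by (intro r_into_rtrancl) (use rf uf in \<open>simp add: fix_restr_def\<close>)
    then have "\<sigma> = \<tau>" by (rule scc_eq[OF assms(5,6) ru(1,2) ru_path])
    then show False using assms(7) by simp
  qed
qed

end
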